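(* Let $k\ge\ell\ge\ell'\ge t\ge1$ be integers and, for $i\in[2]$, let $\omega_i:[0,k]\to\mathbb{R}_{\ge0}$ be non-increasing functions. Let $\mathcal{F}\subseteq\{F\subseteq[k]:|F|\le\ell\}$ and $\mathcal{G}\subseteq\{G\subseteq[k]:|G|\le\ell'\}$ be non-empty cross $t$-intersecting families with maximal necessary intersection point $a$. Suppose that $a\ge t+1$, $\mathcal{F}\setminus\mathcal{F}^a\neq\emptyset$ and $\mathcal{G}\setminus\mathcal{G}^a\ne\emptyset$. Then there are families $\mathcal{F}^*\subseteq\{F\subseteq[k]:|F|\le\ell\}$ and $\mathcal{G}^*\subseteq\{G\subseteq[k]:|G|\le\ell'\}$ such that (1) $\mathcal{F}^*,\mathcal{G}^*$ are non-empty and cross $t$-intersecting; (2) $\omega_1(\mathcal{F}^* )+\omega_2(\mathcal{G}^* )\ge\omega_1(\mathcal{F})+\omega_2(\mathcal{G})$; (3) the maximal necessary intersection point of $\mathcal{F}^*$ and $\mathcal{G}^*$ is smaller than $a$. Moreover, (4) such $\mathcal{F}^*,\mathcal{G}^*$ satisfying (1)–(3) can be chosen to be shifted.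
   Context: Families are cross $t$-intersecting if $|F\cap G|\ge t$ for all $F\in\mathcal{F},G\in\mathcal{G}$. For cross $t$-intersecting $\mathcal{F},\mathcal{G}\subseteq2^{[k]}$, $a\in[k]$ is a necessary intersection point if there exist $F\in\mathcal{F},G\in\mathcal{G}$ with $|[a]\cap F\cap G|=t$ and $a\in F\cap G$; the maximal one is the largest such $a$. With $a$ the maximal necessary intersection point, $\mathcal{F}^a=\{F\in\mathcal{F}:\exists G\in\mathcal{G},\ |[a]\cap F\cap G|=t,\ a\in F\cap G\}$ and $\mathcal{G}^a=\{G\in\mathcal{G}:\exists F\in\mathcal{F},\ |[a]\cap F\cap G|=t,\ a\in F\cap G\}$. For $\omega:[0,k]\to\mathbb{R}_{\ge0}$, $\omega(F)=\omega(|F|)$ and $\omega(\mathcal{F})=\sum_{F\in\mathcal{F}}\omega(F)$; non-increasing means $\omega(i)\ge\omega(j)$ for $i\le j$. The shifting operator: for $i<j$, $s_{i,j}(F)=(F\setminus\{j\})\cup\{i\}$ if $j\in F$, $i\notin F$ and $(F\setminus\{j\})\cup\{i\}\notin\mathcal{F}$, else $s_{i,j}(F)=F$; $s_{i,j}(\mathcal{F})=\{s_{i,j}(F):F\in\mathcal{F}\}$. A family $\mathcal{F}\subseteq2^{[k]}$ is shifted if $s_{i,j}(\mathcal{F})=\mathcal{F}$ for all $1\le i<j\le k$. *)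

theory Defs
  imports Complex_Main
begin

definition cross_t_intersecting :: "nat \<Rightarrow> nat set set \<Rightarrow> nat set set \<Rightarrow> bool" where
  "cross_t_intersecting t \<F> \<G> \<longleftrightarrow> (\<forall>F\<in>\<F>. \<forall>G\<in>\<G>. card (F \<inter> G) \<ge> t)"

definition nec_point :: "nat \<Rightarrow> nat \<Rightarrow> nat set set \<Rightarrow> nat set set \<Rightarrow> nat \<Rightarrow> bool" where
  "nec_point k t \<F> \<G> a \<longleftrightarrow> a \<in> {1..k} \<and>
     (\<exists>F\<in>\<F>. \<exists>G\<in>\<G>. card ({1..a} \<inter> F \<inter> G) = t \<and> a \<in> F \<inter> G)"

definition max_nec_point :: "nat \<Rightarrow> nat \<Rightarrow> nat set set \<Rightarrow> nat set set \<Rightarrow> nat" where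
  "max_nec_point k t \<F> \<G> = Max {a. nec_point k t \<F> \<G> a}"

definition fam_a_F :: "nat \<Rightarrow> nat \<Rightarrow> nat set set \<Rightarrow> nat set set \<Rightarrow> nat set set" where
  "fam_a_F t a \<F> \<G> = {F\<in>\<F>. \<exists>G\<in>\<G>. card ({1..a} \<inter> F \<inter> G) = t \<and> a \<in> F \<inter> G}"

definition fam_a_G :: "nat \<Rightarrow> nat \<Rightarrow> nat set set \<Rightarrow> nat set set \<Rightarrow> nat set set" where
  "fam_a_G t a \<F> \<G> = {G\<in>\<G>. \<exists>F\<in>\<F>. card ({1..a} \<inter> F \<inter> G) = t \<and> a \<in> F \<inter> G}"

definition weight :: "(nat \<Rightarrow> real) \<Rightarrow> nat set set \<Rightarrow> real" where
  "weight \<omega> \<F> = (\<Sum>F\<in>\<F>. \<omega> (card F))"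

definition shift_set :: "nat set set \<Rightarrow> nat \<Rightarrow> nat \<Rightarrow> nat set \<Rightarrow> nat set" where
  "shift_set \<F> i j F =
     (if j \<in> F \<and> i \<notin> F \<and> insert i (F - {j}) \<notin> \<F> then insert i (F - {j}) else F)"

definition shift_fam :: "nat \<Rightarrow> nat \<Rightarrow> nat set set \<Rightarrow> nat set set" where
  "shift_fam i j \<F> = shift_set \<F> i j ` \<F>"

definition shifted :: "nat \<Rightarrow> nat set set \<Rightarrow> bool" where
  "shifted k \<F> \<longleftrightarrow> (\<forall>i j. 1 \<le> i \<and> i < j \<and> j \<le> k \<longrightarrow> shift_fam i j \<F> = \<F>)"

end

theory Submission
  imports Defs
begin

lemma tth:
  fixes S :: "nat set"
  assumes "finite S" "S \<subseteq> {1..k}" "card S \<ge> t" "t \<ge> 1"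
  shows "\<exists>x. x \<in> S \<and> card ({1..x} \<inter> S) = t \<and> (\<forall>y<x. card ({1..y} \<inter> S) < t)"
proof -
  define P where "P x \<longleftrightarrow> card ({1..x} \<inter> S) \<ge> t" for x
  have Pk: "P k" unfolding P_def using assms by (simp add: Int_absorb1)
  define x where "x = (LEAST x. P x)"
  have Px: "P x" unfolding x_def using Pk by (rule LeastI)
  have lt: "\<forall>y<x. card ({1..y} \<inter> S) < t"
    using not_less_Least[of _ P] unfolding x_def P_def by (meson not_le)
  have x0: "x \<noteq> 0" proof assume "x = 0" then show False using Px assms(4) unfolding P_def by simp qed
  then obtain z where z: "x = Suc z" by (cases x) auto
  have cz: "card ({1..z} \<inter> S) < t" using lt z by auto
  have eq: "{1..x} \<inter> S = ({1..z} \<inter> S) \<union> ({x} \<inter> S)" using z by auto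
  have "x \<in> S"
  proof (rule ccontr)
    assume "x \<notin> S"
    then have "{1..x} \<inter> S = {1..z} \<inter> S" using eq by auto
    then show False using Px cz unfolding P_def by simp
  qed
  moreover have "card ({1..x} \<inter> S) \<le> card ({1..z} \<inter> S) + 1"
  proof -
    have "card ({x} \<inter> S) \<le> 1" 
      using card_mono[of "{x}" "{x} \<inter> S"] by simp
    moreover have "card ({1..x} \<inter> S) \<le> card ({1..z} \<inter> S) + card ({x} \<inter> S)"
      unfolding eq by (rule card_Un_le)
    ultimately show ?thesis by linarith
  qed
  ultimately show ?thesis using Px cz lt unfolding P_def by (intro exI[of _ x]) auto
qed


lemma shift_set_card:
  assumes "finite A" "i \<noteq> j"
  shows "card (shift_set Fam i j A) = card A"
proof (cases "j \<in> A \<and> i \<notin> A \<and> insert i (A - {j}) \<notin> Fam")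
  case True
  then have "card A > 0" using assms(1) card_gt_0_iff by blast
  then show ?thesis using True assms unfolding shift_set_def
    by (simp add: card_insert_if card_Diff_singleton_if)
next
  case False
  then show ?thesis unfolding shift_set_def by auto
qed

lemma shift_set_sub:
  assumes "A \<subseteq> {1..k}" "1 \<le> i" "i \<le> k"
  shows "shift_set Fam i j A \<subseteq> {1..k}"
  using assms unfolding shift_set_def by auto

lemma shift_inj:
  assumes "i \<noteq> j"
  shows "inj_on (shift_set Fam i j) Fam"
proof
  fix x y assume x: "x \<in> Fam" and y: "y \<in> Fam" and e: "shift_set Fam i j x = shift_set Fam i j y"
  have r: "A = insert j (insert i (A - {j}) - {i})" if "j \<in> A" "i \<notin> A" for A
    using that assms by auto
  have s1: "shift_set Fam i j A = insert i (A - {j})" if "j \<in> A \<and> i \<notin> A \<and> insert i (A - {j}) \<notin> Fam" for A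
    using that unfolding shift_set_def by simp
  have s2: "shift_set Fam i j A = A" if "\<not> (j \<in> A \<and> i \<notin> A \<and> insert i (A - {j}) \<notin> Fam)" for A
    unfolding shift_set_def by (rule if_not_P[OF that])
  show "x = y"
  proof (cases "j \<in> x \<and> i \<notin> x \<and> insert i (x - {j}) \<notin> Fam")
    case c1: True
    show ?thesis
    proof (cases "j \<in> y \<and> i \<notin> y \<and> insert i (y - {j}) \<notin> Fam")
      case True
      then have "insert i (x - {j}) = insert i (y - {j})" using e c1 s1 by metis
      then show ?thesis using r[of x] r[of y] c1 True by metis
    next
      case False
      then have "insert i (x - {j}) = y" using e c1 s1 s2 by metis
      then show ?thesis using c1 y by simp
    qed
  next
    case c1: False
    show ?thesis
    proof (cases "j \<in> y \<and> i \<notin> y \<and> insert i (y - {j}) \<notin> Fam")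
      case True
      then have "insert i (y - {j}) = x" using e c1 s1 s2 by metis
      then show ?thesis using True x by simp
    next
      case False
      then show ?thesis using e c1 s2 by metis
    qed
  qed
qed

lemma shift_cross:
  assumes P: "\<forall>A\<in>FF. \<forall>B\<in>GG. t \<le> card (X \<inter> A \<inter> B)"
    and fin: "\<forall>A\<in>FF. finite A" "\<forall>B\<in>GG. finite B"
    and ij: "i \<noteq> j" and X: "j \<in> X \<longrightarrow> i \<in> X"
    and A: "A \<in> FF" and B: "B \<in> GG"
  shows "t \<le> card (X \<inter> shift_set FF i j A \<inter> shift_set GG i j B)"
proof -
  have fA: "finite A" and fB: "finite B" using fin A B by auto
  have PAB: "t \<le> card (X \<inter> A \<inter> B)" using P A B by auto
  define sA where "sA = (j \<in> A \<and> i \<notin> A \<and> insert i (A - {j}) \<notin> FF)"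
  define sB where "sB = (j \<in> B \<and> i \<notin> B \<and> insert i (B - {j}) \<notin> GG)"
  define A' where "A' = insert i (A - {j})"
  define B' where "B' = insert i (B - {j})"
  have shA1: "shift_set FF i j A = A'" if sA unfolding shift_set_def A'_def by (rule if_P[OF that[unfolded sA_def]])
  have shA2: "shift_set FF i j A = A" if "\<not> sA" unfolding shift_set_def by (rule if_not_P[OF that[unfolded sA_def]])
  have shB1: "shift_set GG i j B = B'" if sB unfolding shift_set_def B'_def by (rule if_P[OF that[unfolded sB_def]])
  have shB2: "shift_set GG i j B = B" if "\<not> sB" unfolding shift_set_def by (rule if_not_P[OF that[unfolded sB_def]])
  have gen: "card (X \<inter> A \<inter> B) \<le> card (X \<inter> C \<inter> D)"
    if "finite C" "\<forall>x. x \<noteq> j \<longrightarrow> x \<in> A \<inter> B \<longrightarrow> x \<in> C \<inter> D"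
       "j \<in> X \<inter> A \<inter> B \<longrightarrow> i \<in> C \<inter> D \<and> i \<notin> A \<inter> B" for C D
  proof -
    define \<phi> where "\<phi> x = (if x = j then i else x)" for x
    have "inj_on \<phi> (X \<inter> A \<inter> B)" unfolding inj_on_def \<phi>_def using that(3) by auto
    moreover have "\<phi> ` (X \<inter> A \<inter> B) \<subseteq> X \<inter> C \<inter> D" unfolding \<phi>_def using that(2,3) X by auto
    moreover have "finite (X \<inter> C \<inter> D)" using that(1) by auto
    ultimately show ?thesis by (metis card_inj_on_le)
  qed
  show ?thesis
  proof (cases sA)
    case True
    note sA = True
    show ?thesis
    proof (cases sB)
      case True
      have "card (X \<inter> A \<inter> B) \<le> card (X \<inter> A' \<inter> B')"
        by (rule gen) (use sA True fA in \<open>auto simp: sA_def sB_def A'_def B'_def\<close>)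
      then show ?thesis using PAB shA1[OF sA] shB1[OF True] by simp
    next
      case False
      show ?thesis
      proof (cases "j \<in> B \<and> i \<notin> B")
        case True
        then have B'G: "B' \<in> GG" using False unfolding sB_def B'_def by auto
        have "X \<inter> A' \<inter> B = X \<inter> A \<inter> B'" using sA True unfolding sA_def A'_def B'_def by auto
        moreover have "t \<le> card (X \<inter> A \<inter> B')" using P A B'G by auto
        moreover have "shift_set FF i j A = A'" "shift_set GG i j B = B"
          using shA1[OF sA] shB2 \<open>\<not> sB\<close> by auto
        ultimately show ?thesis by simp
      next
        case False
        have "card (X \<inter> A \<inter> B) \<le> card (X \<inter> A' \<inter> B)"
          by (rule gen) (use sA False fA in \<open>auto simp: sA_def sB_def A'_def B'_def\<close>)
        then show ?thesis using PAB shA1[OF sA] shB2[OF \<open>\<not> sB\<close>] by simp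
      qed
    qed
  next
    case False
    note nA = False
    show ?thesis
    proof (cases sB)
      case True
      note sB = True
      show ?thesis
      proof (cases "j \<in> A \<and> i \<notin> A")
        case True
        then have A'F: "A' \<in> FF" using nA unfolding sA_def A'_def by auto
        have "X \<inter> A \<inter> B' = X \<inter> A' \<inter> B" using sB True unfolding sB_def A'_def B'_def by auto
        moreover have "t \<le> card (X \<inter> A' \<inter> B)" using P B A'F by auto
        moreover have "shift_set FF i j A = A" "shift_set GG i j B = B'"
          using shA2[OF nA] shB1[OF sB] by auto
        ultimately show ?thesis by simp
      next
        case False
        have "card (X \<inter> A \<inter> B) \<le> card (X \<inter> A \<inter> B')"
          by (rule gen) (use sB False fA in \<open>auto simp: sA_def sB_def A'_def B'_def\<close>)
        then show ?thesis using PAB shA2[OF nA] shB1[OF sB] by simp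
      qed
    next
      case False
      then show ?thesis using PAB shA2[OF nA] shB2[OF False] by simp
    qed
  qed
qed


definition mu :: "nat set set \<Rightarrow> nat" where "mu Fam = (\<Sum>A\<in>Fam. \<Sum>A)"

definition Bnd :: "nat \<Rightarrow> nat \<Rightarrow> nat set set" where "Bnd k l = {F. F \<subseteq> {1..k} \<and> card F \<le> l}"

definition Props where
  "Props k l l' t m \<omega>1 \<omega>2 w0 FF GG \<longleftrightarrow> FF \<subseteq> Bnd k l \<and> GG \<subseteq> Bnd k l' \<and> FF \<noteq> {} \<and> GG \<noteq> {} \<and>
     (\<forall>A\<in>FF. \<forall>B\<in>GG. t \<le> card ({1..m} \<inter> A \<inter> B)) \<and> w0 \<le> weight \<omega>1 FF + weight \<omega>2 GG"

lemma Bnd_finite: "finite (Bnd k l)"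
  unfolding Bnd_def by (rule finite_subset[of _ "Pow {1..k}"]) auto

lemma sum_shift_set:
  assumes "finite A" "i < j"
  shows "\<Sum>(shift_set Fam i j A) \<le> \<Sum>A"
    and "shift_set Fam i j A \<noteq> A \<Longrightarrow> \<Sum>(shift_set Fam i j A) < \<Sum>A"
proof -
  have m: "\<Sum>(shift_set Fam i j A) < \<Sum>A" if c: "j \<in> A \<and> i \<notin> A \<and> insert i (A - {j}) \<notin> Fam"
  proof -
    have "\<Sum>(insert i (A - {j})) = i + \<Sum>(A - {j})" using c assms by simp
    moreover have "\<Sum>A = j + \<Sum>(A - {j})" using sum.remove[of A j "\<lambda>x. x"] c assms by simp
    ultimately show ?thesis using c assms unfolding shift_set_def by simp
  qed
  have e: "shift_set Fam i j A = A" if c: "\<not> (j \<in> A \<and> i \<notin> A \<and> insert i (A - {j}) \<notin> Fam)"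
    unfolding shift_set_def by (rule if_not_P[OF c])
  show "\<Sum>(shift_set Fam i j A) \<le> \<Sum>A" using m e by (metis le_refl less_imp_le)
  show "shift_set Fam i j A \<noteq> A \<Longrightarrow> \<Sum>(shift_set Fam i j A) < \<Sum>A" using m e by metis
qed

lemma mu_shift:
  assumes "finite Fam" "\<forall>A\<in>Fam. finite A" "i < j"
  shows "mu (shift_fam i j Fam) \<le> mu Fam"
    and "shift_fam i j Fam \<noteq> Fam \<Longrightarrow> mu (shift_fam i j Fam) < mu Fam"
proof -
  have inj: "inj_on (shift_set Fam i j) Fam" using shift_inj assms(3) by simp
  have eq: "mu (shift_fam i j Fam) = (\<Sum>A\<in>Fam. \<Sum>(shift_set Fam i j A))"
    unfolding mu_def shift_fam_def using sum.reindex[OF inj] by simp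
  have "(\<Sum>A\<in>Fam. \<Sum>(shift_set Fam i j A)) \<le> (\<Sum>A\<in>Fam. \<Sum>A)"
    by (rule sum_mono) (use sum_shift_set(1) assms in auto)
  then show "mu (shift_fam i j Fam) \<le> mu Fam" unfolding eq by (simp add: mu_def)
  assume ne: "shift_fam i j Fam \<noteq> Fam"
  then obtain A where A: "A \<in> Fam" "shift_set Fam i j A \<noteq> A"
    unfolding shift_fam_def by (metis (no_types, lifting) image_cong image_ident)
  have "(\<Sum>A\<in>Fam. \<Sum>(shift_set Fam i j A)) < (\<Sum>A\<in>Fam. \<Sum>A)"
  proof (rule sum_strict_mono_ex1)
    show "finite Fam" using assms by simp
    show "\<forall>x\<in>Fam. \<Sum>(shift_set Fam i j x) \<le> \<Sum>x" using sum_shift_set(1) assms by blast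
    show "\<exists>a\<in>Fam. \<Sum>(shift_set Fam i j a) < \<Sum>a" using sum_shift_set(2) assms A by blast
  qed
  then show "mu (shift_fam i j Fam) < mu Fam" unfolding eq by (simp add: mu_def)
qed

lemma weight_shift:
  assumes "\<forall>A\<in>Fam. finite A" "i \<noteq> j"
  shows "weight \<omega> (shift_fam i j Fam) = weight \<omega> Fam"
proof -
  have inj: "inj_on (shift_set Fam i j) Fam" using shift_inj assms(2) by simp
  have "(\<Sum>F\<in>shift_set Fam i j ` Fam. \<omega> (card F)) = (\<Sum>A\<in>Fam. \<omega> (card (shift_set Fam i j A)))"
    using sum.reindex[OF inj, of "\<lambda>F. \<omega> (card F)"] by simp
  also have "\<dots> = (\<Sum>A\<in>Fam. \<omega> (card A))"
    by (rule sum.cong) (auto simp: shift_set_card assms)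
  finally show ?thesis unfolding weight_def shift_fam_def .
qed

lemma Props_shift:
  assumes P: "Props k l l' t m \<omega>1 \<omega>2 w0 FF GG" and ij: "1 \<le> i" "i < j" "j \<le> k"
  shows "Props k l l' t m \<omega>1 \<omega>2 w0 (shift_fam i j FF) (shift_fam i j GG)"
proof -
  have FB: "FF \<subseteq> Bnd k l" and GB: "GG \<subseteq> Bnd k l'" using P unfolding Props_def by auto
  have finF: "\<forall>A\<in>FF. finite A" using FB unfolding Bnd_def by (auto intro: finite_subset)
  have finG: "\<forall>A\<in>GG. finite A" using GB unfolding Bnd_def by (auto intro: finite_subset)
  have bnd: "shift_fam i j Fam \<subseteq> Bnd k l0" if "Fam \<subseteq> Bnd k l0" for Fam l0
  proof
    fix C assume "C \<in> shift_fam i j Fam"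
    then obtain A where A: "A \<in> Fam" "C = shift_set Fam i j A" unfolding shift_fam_def by auto
    have "A \<subseteq> {1..k}" "card A \<le> l0" using A that unfolding Bnd_def by auto
    moreover have "finite A" using \<open>A \<subseteq> {1..k}\<close> by (rule finite_subset) simp
    ultimately show "C \<in> Bnd k l0" unfolding Bnd_def A(2) using shift_set_sub[of A k i Fam j] shift_set_card[of A i j Fam] ij
      by auto
  qed
  have cr: "\<forall>A\<in>shift_fam i j FF. \<forall>B\<in>shift_fam i j GG. t \<le> card ({1..m} \<inter> A \<inter> B)"
  proof (intro ballI)
    fix C D assume "C \<in> shift_fam i j FF" "D \<in> shift_fam i j GG"
    then obtain A B where A: "A \<in> FF" "C = shift_set FF i j A" and B: "B \<in> GG" "D = shift_set GG i j B"
      unfolding shift_fam_def by auto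
    show "t \<le> card ({1..m} \<inter> C \<inter> D)" unfolding A(2) B(2)
      by (rule shift_cross) (use P finF finG ij A B in \<open>auto simp: Props_def\<close>)
  qed
  show ?thesis using P bnd[OF FB] bnd[OF GB] cr weight_shift[OF finF] weight_shift[OF finG] ij
    unfolding Props_def shift_fam_def by auto
qed


lemma make_shifted:
  assumes "Props k l l' t m \<omega>1 \<omega>2 w0 FF GG"
  shows "\<exists>F' G'. Props k l l' t m \<omega>1 \<omega>2 w0 F' G' \<and> shifted k F' \<and> shifted k G'"
proof -
  have "\<forall>FF GG. mu FF + mu GG = n \<longrightarrow> Props k l l' t m \<omega>1 \<omega>2 w0 FF GG \<longrightarrow>
          (\<exists>F' G'. Props k l l' t m \<omega>1 \<omega>2 w0 F' G' \<and> shifted k F' \<and> shifted k G')" for n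
  proof (induction n rule: less_induct)
    case (less n)
    show ?case
    proof (intro allI impI)
      fix FF GG assume n: "mu FF + mu GG = n" and P: "Props k l l' t m \<omega>1 \<omega>2 w0 FF GG"
      have FB: "FF \<subseteq> Bnd k l" and GB: "GG \<subseteq> Bnd k l'" using P unfolding Props_def by auto
      have fF: "finite FF" using FB Bnd_finite finite_subset by blast
      have fG: "finite GG" using GB Bnd_finite finite_subset by blast
      have finF: "\<forall>A\<in>FF. finite A" using FB unfolding Bnd_def by (auto intro: finite_subset)
      have finG: "\<forall>A\<in>GG. finite A" using GB unfolding Bnd_def by (auto intro: finite_subset)
      show "\<exists>F' G'. Props k l l' t m \<omega>1 \<omega>2 w0 F' G' \<and> shifted k F' \<and> shifted k G'"
      proof (cases "shifted k FF \<and> shifted k GG")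
        case True
        then show ?thesis using P by blast
      next
        case False
        then obtain i j where ij: "1 \<le> i" "i < j" "j \<le> k"
          and ne: "shift_fam i j FF \<noteq> FF \<or> shift_fam i j GG \<noteq> GG"
          unfolding shifted_def by blast
        have "mu (shift_fam i j FF) + mu (shift_fam i j GG) < n"
          using mu_shift[OF fF finF ij(2)] mu_shift[OF fG finG ij(2)] ne n by linarith
        moreover have "Props k l l' t m \<omega>1 \<omega>2 w0 (shift_fam i j FF) (shift_fam i j GG)"
          using Props_shift[OF P ij] .
        ultimately show ?thesis using less.IH by blast
      qed
    qed
  qed
  then show ?thesis using assms by blast
qed

lemma optA:
  assumes FB: "FF \<subseteq> Bnd k l" and GB: "GG \<subseteq> Bnd k l'" and Fne: "FF \<noteq> {}"
    and Gne: "GG - fam_a_G t a FF GG \<noteq> {}" and t1: "t \<ge> 1" and a1: "a \<ge> 1"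
    and H: "\<forall>A\<in>FF. \<forall>B\<in>GG. t \<le> card ({1..a} \<inter> A \<inter> B)"
    and mono: "\<forall>i j. i \<le> j \<and> j \<le> k \<longrightarrow> \<omega>1 j \<le> \<omega>1 i"
    and W: "weight \<omega>2 (fam_a_G t a FF GG) \<le> weight \<omega>1 (fam_a_F t a FF GG)"
  shows "Props k l l' t (a - 1) \<omega>1 \<omega>2 (weight \<omega>1 FF + weight \<omega>2 GG)
           (FF \<union> (\<lambda>A. A - {a}) ` fam_a_F t a FF GG) (GG - fam_a_G t a FF GG)"
proof -
  define Fa where "Fa = fam_a_F t a FF GG"
  define Ga where "Ga = fam_a_G t a FF GG"
  define D where "D = (\<lambda>A. A - {a}) ` Fa"
  have fF: "finite FF" using FB Bnd_finite finite_subset by blast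
  have fG: "finite GG" using GB Bnd_finite finite_subset by blast
  have finF: "\<forall>A\<in>FF. finite A" using FB unfolding Bnd_def by (auto intro: finite_subset)
  have finG: "\<forall>A\<in>GG. finite A" using GB unfolding Bnd_def by (auto intro: finite_subset)
  have FaF: "Fa \<subseteq> FF" and GaG: "Ga \<subseteq> GG" unfolding Fa_def Ga_def fam_a_F_def fam_a_G_def by auto
  have aFa: "a \<in> A" if "A \<in> Fa" for A using that unfolding Fa_def fam_a_F_def by auto
  have noF: "A - {a} \<notin> FF" if A: "A \<in> Fa" for A
  proof
    assume Am: "A - {a} \<in> FF"
    obtain B where B: "B \<in> GG" "card ({1..a} \<inter> A \<inter> B) = t" "a \<in> A \<inter> B"
      using A unfolding Fa_def fam_a_F_def by auto
    have "{1..a} \<inter> (A - {a}) \<inter> B = ({1..a} \<inter> A \<inter> B) - {a}" by auto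
    moreover have "card (({1..a} \<inter> A \<inter> B) - {a}) = t - 1"
      using B a1 finF A FaF by (subst card_Diff_singleton) auto
    moreover have "t \<le> card ({1..a} \<inter> (A - {a}) \<inter> B)" using H Am B by auto
    ultimately show False using t1 by simp
  qed
  have DF: "D \<inter> FF = {}" unfolding D_def using noF by auto
  have inj: "inj_on (\<lambda>A. A - {a}) Fa"
    unfolding inj_on_def using aFa by (metis insert_Diff)
  have fFa: "finite Fa" using FaF fF finite_subset by blast
  have wD: "weight \<omega>1 Fa \<le> weight \<omega>1 D"
  proof -
    have "weight \<omega>1 D = (\<Sum>A\<in>Fa. \<omega>1 (card (A - {a})))"
      unfolding weight_def D_def using sum.reindex[OF inj, of "\<lambda>F. \<omega>1 (card F)"] by simp
    moreover have "(\<Sum>A\<in>Fa. \<omega>1 (card A)) \<le> (\<Sum>A\<in>Fa. \<omega>1 (card (A - {a})))"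
    proof (rule sum_mono)
      fix A assume A: "A \<in> Fa"
      have "card A \<le> k" using A FaF FB unfolding Bnd_def by (auto intro: card_mono[of "{1..k}", simplified])
      moreover have "card (A - {a}) \<le> card A" using A FaF finF by (auto intro: card_mono)
      ultimately show "\<omega>1 (card A) \<le> \<omega>1 (card (A - {a}))" using mono by auto
    qed
    ultimately show ?thesis unfolding weight_def by simp
  qed
  have fD: "finite D" unfolding D_def using fFa by simp
  have w1: "weight \<omega>1 (FF \<union> D) = weight \<omega>1 FF + weight \<omega>1 D"
    unfolding weight_def using sum.union_disjoint[OF fF fD] DF by (simp add: Int_commute)
  have w2: "weight \<omega>2 (GG - Ga) = weight \<omega>2 GG - weight \<omega>2 Ga"
    unfolding weight_def using sum_diff[OF fG GaG] by simp
  have DB: "D \<subseteq> Bnd k l"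
  proof
    fix C assume "C \<in> D"
    then obtain A where A: "A \<in> Fa" "C = A - {a}" unfolding D_def by auto
    have "A \<in> Bnd k l" using A FaF FB by auto
    moreover have "card C \<le> card A" using A FaF finF by (auto intro: card_mono)
    ultimately show "C \<in> Bnd k l" using A unfolding Bnd_def by auto
  qed
  have K: "t \<le> card (({1..a} \<inter> A \<inter> B) - {a})" if A: "A \<in> FF" and B: "B \<in> GG - Ga" for A B
  proof -
    define S where "S = {1..a} \<inter> A \<inter> B"
    have tS: "t \<le> card S" using H A B unfolding S_def by auto
    have fS: "finite S" unfolding S_def by simp
    show ?thesis
    proof (cases "a \<in> S")
      case True
      have "card S \<noteq> t" using True A B unfolding S_def Ga_def fam_a_G_def by auto
      then show ?thesis using tS True fS unfolding S_def[symmetric] by (simp add: card_Diff_singleton)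
    next
      case False
      then show ?thesis using tS unfolding S_def[symmetric] by simp
    qed
  qed
  have ivl: "{1..a - 1} = {1..a} - {a}" using a1 by auto
  have cr: "\<forall>C\<in>FF \<union> D. \<forall>B\<in>GG - Ga. t \<le> card ({1..a - 1} \<inter> C \<inter> B)"
  proof (intro ballI)
    fix C B assume C: "C \<in> FF \<union> D" and B: "B \<in> GG - Ga"
    show "t \<le> card ({1..a - 1} \<inter> C \<inter> B)"
    proof (cases "C \<in> FF")
      case True
      have "{1..a - 1} \<inter> C \<inter> B = ({1..a} \<inter> C \<inter> B) - {a}" unfolding ivl by auto
      then show ?thesis using K[OF True B] by simp
    next
      case False
      then obtain A where A: "A \<in> Fa" "C = A - {a}" using C unfolding D_def by auto
      have "{1..a - 1} \<inter> C \<inter> B = ({1..a} \<inter> A \<inter> B) - {a}" unfolding ivl A(2) by auto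
      then show ?thesis using K[OF _ B, of A] A FaF by auto
    qed
  qed
  show ?thesis unfolding Props_def Fa_def[symmetric] Ga_def[symmetric] D_def[symmetric]
    using FB GB Fne Gne DB cr w1 w2 wD W unfolding Ga_def[symmetric] Fa_def[symmetric]
    by auto
qed


lemma Props_swap:
  assumes "Props k l l' t m \<omega>1 \<omega>2 w FF GG"
  shows "Props k l' l t m \<omega>2 \<omega>1 w GG FF"
proof -
  have e: "{1..m} \<inter> B \<inter> A = {1..m} \<inter> A \<inter> B" for A B :: "nat set" by auto
  have "\<forall>A\<in>GG. \<forall>B\<in>FF. t \<le> card ({1..m} \<inter> A \<inter> B)"
  proof (intro ballI)
    fix A B assume "A \<in> GG" "B \<in> FF"
    then have "t \<le> card ({1..m} \<inter> B \<inter> A)" using assms unfolding Props_def by blast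
    then show "t \<le> card ({1..m} \<inter> A \<inter> B)" by (simp only: e)
  qed
  then show ?thesis using assms unfolding Props_def by (simp add: add.commute)
qed

lemma fam_swap: "fam_a_G t a GG FF = fam_a_F t a FF GG" "fam_a_F t a GG FF = fam_a_G t a FF GG"
  unfolding fam_a_F_def fam_a_G_def by (auto simp: Int_ac)

lemma max_lt:
  assumes FB: "FF \<subseteq> Bnd k l" and GB: "GG \<subseteq> Bnd k l'" and ne: "FF \<noteq> {}" "GG \<noteq> {}"
    and t1: "t \<ge> 1" and P: "\<forall>A\<in>FF. \<forall>B\<in>GG. t \<le> card ({1..m} \<inter> A \<inter> B)"
  shows "max_nec_point k t FF GG \<le> m"
proof -
  define N where "N = {a. nec_point k t FF GG a}"
  have fN: "finite N" unfolding N_def nec_point_def by (rule finite_subset[of _ "{1..k}"]) auto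
  obtain A B where A: "A \<in> FF" and B: "B \<in> GG" using ne by auto
  have AB: "A \<subseteq> {1..k}" "B \<subseteq> {1..k}" using A B FB GB unfolding Bnd_def by auto
  have "t \<le> card ({1..m} \<inter> A \<inter> B)" using P A B by auto
  also have "\<dots> \<le> card (A \<inter> B)" using AB by (intro card_mono) (auto intro: finite_subset)
  finally obtain x where x: "x \<in> A \<inter> B" "card ({1..x} \<inter> (A \<inter> B)) = t"
    using tth[of "A \<inter> B" k t] AB t1 by (auto intro: finite_subset)
  have "x \<in> N" unfolding N_def nec_point_def using x AB A B by (auto simp: Int_assoc)
  then have Nne: "N \<noteq> {}" by auto
  have "b \<le> m" if b: "b \<in> N" for b
  proof (rule ccontr)
    assume bm: "\<not> b \<le> m"
    obtain C D where C: "C \<in> FF" "D \<in> GG" "card ({1..b} \<inter> C \<inter> D) = t" "b \<in> C \<inter> D"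
      using b unfolding N_def nec_point_def by auto
    have "insert b ({1..m} \<inter> C \<inter> D) \<subseteq> {1..b} \<inter> C \<inter> D" using bm C b
      unfolding N_def nec_point_def by auto
    then have "card (insert b ({1..m} \<inter> C \<inter> D)) \<le> card ({1..b} \<inter> C \<inter> D)" by (intro card_mono) auto
    then have "card (insert b ({1..m} \<inter> C \<inter> D)) \<le> t" using C(3) by simp
    moreover have "card (insert b ({1..m} \<inter> C \<inter> D)) = card ({1..m} \<inter> C \<inter> D) + 1"
      using bm by simp
    moreover have "t \<le> card ({1..m} \<inter> C \<inter> D)" using P C by auto
    ultimately show False by simp
  qed
  then have "Max N \<le> m" using fN Nne by (intro Max.boundedI) auto
  then show ?thesis unfolding max_nec_point_def N_def[symmetric] .
qed

lemma H_lemma: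
  assumes FB: "FF \<subseteq> Bnd k l" and GB: "GG \<subseteq> Bnd k l'" and t1: "t \<ge> 1"
    and cr: "cross_t_intersecting t FF GG" and a: "a = max_nec_point k t FF GG"
  shows "\<forall>A\<in>FF. \<forall>B\<in>GG. t \<le> card ({1..a} \<inter> A \<inter> B)"
proof (intro ballI)
  fix A B assume A: "A \<in> FF" and B: "B \<in> GG"
  define N where "N = {a. nec_point k t FF GG a}"
  have fN: "finite N" unfolding N_def nec_point_def by (rule finite_subset[of _ "{1..k}"]) auto
  have AB: "A \<subseteq> {1..k}" "B \<subseteq> {1..k}" using A B FB GB unfolding Bnd_def by auto
  have "t \<le> card (A \<inter> B)" using cr A B unfolding cross_t_intersecting_def by auto
  then obtain x where x: "x \<in> A \<inter> B" "card ({1..x} \<inter> (A \<inter> B)) = t"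
    using tth[of "A \<inter> B" k t] AB t1 by (auto intro: finite_subset)
  have "x \<in> N" unfolding N_def nec_point_def using x AB A B by (auto simp: Int_assoc)
  then have "x \<le> Max N" using fN by (rule Max_ge[rotated])
  then have "x \<le> a" unfolding a max_nec_point_def N_def[symmetric] .
  then have "{1..x} \<inter> (A \<inter> B) \<subseteq> {1..a} \<inter> A \<inter> B" by auto
  then have "card ({1..x} \<inter> (A \<inter> B)) \<le> card ({1..a} \<inter> A \<inter> B)" by (intro card_mono) auto
  then show "t \<le> card ({1..a} \<inter> A \<inter> B)" using x by simp
qed

theorem lemma3p5:
  fixes k l l' t a :: nat and \<omega>1 \<omega>2 :: "nat \<Rightarrow> real" and \<F> \<G> :: "nat set set"
  assumes "k \<ge> l" "l \<ge> l'" "l' \<ge> t" "t \<ge> 1"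
    and "\<forall>i\<le>k. \<omega>1 i \<ge> 0" "\<forall>i\<le>k. \<omega>2 i \<ge> 0"
    and "\<forall>i j. i \<le> j \<and> j \<le> k \<longrightarrow> \<omega>1 i \<ge> \<omega>1 j"
    and "\<forall>i j. i \<le> j \<and> j \<le> k \<longrightarrow> \<omega>2 i \<ge> \<omega>2 j"
    and "\<F> \<subseteq> {F. F \<subseteq> {1..k} \<and> card F \<le> l}"
    and "\<G> \<subseteq> {G. G \<subseteq> {1..k} \<and> card G \<le> l'}"
    and "\<F> \<noteq> {}" "\<G> \<noteq> {}"
    and "cross_t_intersecting t \<F> \<G>"
    and "a = max_nec_point k t \<F> \<G>"
    and "a \<ge> t + 1"
    and "\<F> - fam_a_F t a \<F> \<G> \<noteq> {}"
    and "\<G> - fam_a_G t a \<F> \<G> \<noteq> {}"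
  shows "\<exists>\<F>s \<G>s.
           \<F>s \<subseteq> {F. F \<subseteq> {1..k} \<and> card F \<le> l} \<and>
           \<G>s \<subseteq> {G. G \<subseteq> {1..k} \<and> card G \<le> l'} \<and>
           \<F>s \<noteq> {} \<and> \<G>s \<noteq> {} \<and> cross_t_intersecting t \<F>s \<G>s \<and>
           weight \<omega>1 \<F>s + weight \<omega>2 \<G>s \<ge> weight \<omega>1 \<F> + weight \<omega>2 \<G> \<and>
           max_nec_point k t \<F>s \<G>s < a \<and>
           shifted k \<F>s \<and> shifted k \<G>s"
proof -
  have FB: "\<F> \<subseteq> Bnd k l" and GB: "\<G> \<subseteq> Bnd k l'" using assms(9,10) unfolding Bnd_def by auto
  have a1: "a \<ge> 1" using assms(15) by simp
  have H: "\<forall>A\<in>\<F>. \<forall>B\<in>\<G>. t \<le> card ({1..a} \<inter> A \<inter> B)"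
    using H_lemma[OF FB GB assms(4) assms(13) assms(14)] .
  define w0 where "w0 = weight \<omega>1 \<F> + weight \<omega>2 \<G>"
  have "\<exists>F1 G1. Props k l l' t (a - 1) \<omega>1 \<omega>2 w0 F1 G1"
  proof (cases "weight \<omega>2 (fam_a_G t a \<F> \<G>) \<le> weight \<omega>1 (fam_a_F t a \<F> \<G>)")
    case True
    show ?thesis unfolding w0_def
      using optA[OF FB GB assms(11) assms(17) assms(4) a1 H assms(7) True] by blast
  next
    case False
    have H': "\<forall>B\<in>\<G>. \<forall>A\<in>\<F>. t \<le> card ({1..a} \<inter> B \<inter> A)" 
    proof (intro ballI)
      fix B A assume "B \<in> \<G>" "A \<in> \<F>"
      moreover have "{1..a} \<inter> B \<inter> A = {1..a} \<inter> A \<inter> B" by auto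
      ultimately show "t \<le> card ({1..a} \<inter> B \<inter> A)" using H by simp
    qed
    have W': "weight \<omega>1 (fam_a_G t a \<G> \<F>) \<le> weight \<omega>2 (fam_a_F t a \<G> \<F>)"
      using False unfolding fam_swap(1)[of t a \<G> \<F>] fam_swap(2)[of t a \<G> \<F>] by simp
    have ne': "\<F> - fam_a_G t a \<G> \<F> \<noteq> {}" using assms(16) unfolding fam_swap(1)[of t a \<G> \<F>] .
    have "Props k l' l t (a - 1) \<omega>2 \<omega>1 (weight \<omega>2 \<G> + weight \<omega>1 \<F>)
           (\<G> \<union> (\<lambda>A. A - {a}) ` fam_a_F t a \<G> \<F>) (\<F> - fam_a_G t a \<G> \<F>)"
      using optA[OF GB FB assms(12) ne' assms(4) a1 H' assms(8) W'] .
    from Props_swap[OF this] have "Props k l l' t (a - 1) \<omega>1 \<omega>2 w0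
           (\<F> - fam_a_G t a \<G> \<F>) (\<G> \<union> (\<lambda>A. A - {a}) ` fam_a_F t a \<G> \<F>)"
      unfolding w0_def by (simp add: add.commute)
    then show ?thesis by blast
  qed
  then obtain F1 G1 where "Props k l l' t (a - 1) \<omega>1 \<omega>2 w0 F1 G1" by blast
  then obtain F2 G2 where P2: "Props k l l' t (a - 1) \<omega>1 \<omega>2 w0 F2 G2" and sh: "shifted k F2" "shifted k G2"
    using make_shifted by blast
  have F2B: "F2 \<subseteq> Bnd k l" and G2B: "G2 \<subseteq> Bnd k l'" and ne2: "F2 \<noteq> {}" "G2 \<noteq> {}"
    and P: "\<forall>A\<in>F2. \<forall>B\<in>G2. t \<le> card ({1..a - 1} \<inter> A \<inter> B)"
    and W: "w0 \<le> weight \<omega>1 F2 + weight \<omega>2 G2" using P2 unfolding Props_def by auto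
  have cr: "cross_t_intersecting t F2 G2" unfolding cross_t_intersecting_def
  proof (intro ballI)
    fix A B assume A: "A \<in> F2" and B: "B \<in> G2"
    have "finite A" using A F2B unfolding Bnd_def by (auto intro: finite_subset)
    then have "card ({1..a - 1} \<inter> A \<inter> B) \<le> card (A \<inter> B)" by (intro card_mono) auto
    then show "t \<le> card (A \<inter> B)" using P A B by force
  qed
  have "max_nec_point k t F2 G2 \<le> a - 1" using max_lt[OF F2B G2B ne2 assms(4) P] .
  then have "max_nec_point k t F2 G2 < a" using a1 by simp
  moreover have "F2 \<subseteq> {F. F \<subseteq> {1..k} \<and> card F \<le> l}" "G2 \<subseteq> {G. G \<subseteq> {1..k} \<and> card G \<le> l'}"
    using F2B G2B unfolding Bnd_def by auto
  ultimately show ?thesis using ne2 cr W sh unfolding w0_def by (intro exI[of _ F2] exI[of _ G2]) simp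
qed

end
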